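(* For every positive integer $n$ there exists a function $f_n:\mathbb Z\to\omega$ such that for all $l,d<\omega$ there exists $m<\omega$ such that for every $p:n\to\mathbb Z$ with $\max\{|p(k)-p(k')|\mid k<k'<n\}\le d$ there exists $i<m$ with $f_n(p(k)+i)=l$ for every $k<n$.
   Context: Here $n=\{0,\dots,n-1\}$ and $\omega$ is the set of natural numbers; for $n=1$ the maximum over the empty set is taken to be $0$. *)

theory Defs
  imports Main
begin

end

theory Submission
  imports Defs "HOL-Number_Theory.Number_Theory" "HOL-Library.Nat_Bijection"
begin

primrec Qs :: "nat \<Rightarrow> nat \<Rightarrow> nat" where
  "Qs n 0 = (SOME p. prime p \<and> n < p)"
| "Qs n (Suc j) = (SOME p. prime p \<and> max (Qs n j) (n*(2*j+3)) < p)"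

lemma some_prime: "prime (SOME p. prime p \<and> b < p) \<and> b < (SOME p. prime p \<and> (b::nat) < p)"
  using someI_ex[OF bigger_prime[of b]] by blast

lemma Qs_Suc: "prime (Qs n (Suc j)) \<and> max (Qs n j) (n*(2*j+3)) < Qs n (Suc j)"
  unfolding Qs.simps by (rule some_prime)

lemma Qs_prop: "prime (Qs n j) \<and> n*(2*j+1) < Qs n j"
proof (cases j)
  case 0
  then show ?thesis using some_prime[of n] by simp
next
  case (Suc i)
  then show ?thesis using Qs_Suc[of n i] by (simp del: Qs.simps add: algebra_simps)
qed

lemma Qs_mono: "Qs n j < Qs n (Suc j)"
  using Qs_Suc[of n j] by (simp del: Qs.simps)

lemma Qs_smono: "strict_mono (Qs n)"
  by (simp del: Qs.simps add: Qs_mono strict_mono_Suc_iff)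

lemma Qs_coprime: "i \<noteq> j \<Longrightarrow> coprime (Qs n i) (Qs n j)"
  by (metis Qs_prop Qs_smono primes_coprime strict_mono_eq)

definition fn :: "nat \<Rightarrow> int \<Rightarrow> nat" where
  "fn n x = fst (prod_decode (LEAST j. x mod int (Qs n j) \<le> int (2*j)))"

lemma good_residue:
  assumes "n*(2*j+1) < Q"
  shows "\<exists>r<Q. \<forall>k<n. \<forall>s\<le>2*j. r \<noteq> nat ((int s - p k) mod int Q)"
proof -
  let ?B = "(\<lambda>(s,k). nat ((int s - p k) mod int Q)) ` ({..2*j} \<times> {..<n})"
  have "card ?B \<le> card ({..2*j} \<times> {..<n})" by (rule card_image_le) auto
  also have "\<dots> = (2*j+1)*n" by (simp add: card_cartesian_product)
  finally have "card ?B < card {..<Q}" using assms by (simp add: mult.commute)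
  then have "\<not> {..<Q} \<subseteq> ?B" using card_mono[of ?B "{..<Q}"] by auto
  then obtain r where "r < Q" "r \<notin> ?B" by auto
  then show ?thesis by force
qed

theorem corollary3p9:
  shows "\<forall>n::nat. n \<ge> 1 \<longrightarrow>
    (\<exists>f :: int \<Rightarrow> nat. \<forall>(l::nat) (d::nat). \<exists>m::nat.
       \<forall>p :: nat \<Rightarrow> int.
         (\<forall>k k'. k < k' \<and> k' < n \<longrightarrow> \<bar>p k - p k'\<bar> \<le> int d) \<longrightarrow>
         (\<exists>i<m. \<forall>k<n. f (p k + int i) = l))"
proof (intro allI impI)
  fix n :: nat assume n1: "n \<ge> 1"
  show "\<exists>f :: int \<Rightarrow> nat. \<forall>(l::nat) (d::nat). \<exists>m::nat.
       \<forall>p :: nat \<Rightarrow> int.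
         (\<forall>k k'. k < k' \<and> k' < n \<longrightarrow> \<bar>p k - p k'\<bar> \<le> int d) \<longrightarrow>
         (\<exists>i<m. \<forall>k<n. f (p k + int i) = l)"
  proof (intro exI[of _ "fn n"] allI)
    fix l d :: nat
    define J where "J = prod_encode (l, d)"
    have dJ: "d \<le> J" unfolding J_def by (rule le_prod_encode_2)
    define Q where "Q = Qs n"
    have QJ: "2*J < Q J" using Qs_prop[of n J] n1 unfolding Q_def
      by (metis dual_order.strict_trans2 le_add1 mult_1 mult_le_mono1 mult_Suc_right add.commute)
    show "\<exists>m. \<forall>p. (\<forall>k k'. k < k' \<and> k' < n \<longrightarrow> \<bar>p k - p k'\<bar> \<le> int d) \<longrightarrow>
         (\<exists>i<m. \<forall>k<n. fn n (p k + int i) = l)"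
    proof (rule exI[of _ "\<Prod>j\<in>{..J}. Q j"], intro allI impI)
      fix p :: "nat \<Rightarrow> int"
      assume diam: "\<forall>k k'. k < k' \<and> k' < n \<longrightarrow> \<bar>p k - p k'\<bar> \<le> int d"
      have "\<forall>j. \<exists>r. j < J \<longrightarrow> r < Q j \<and> (\<forall>k<n. \<forall>s\<le>2*j. r \<noteq> nat ((int s - p k) mod int (Q j)))"
        using good_residue Qs_prop unfolding Q_def by metis
      then obtain R where R: "\<And>j. j < J \<Longrightarrow> R j < Q j \<and> (\<forall>k<n. \<forall>s\<le>2*j. R j \<noteq> nat ((int s - p k) mod int (Q j)))"
        by metis
      define u where "u j = (if j < J then R j else nat ((int d - p 0) mod int (Q J)))" for j
      have "\<exists>!x. x < (\<Prod>j\<in>{..J}. Q j) \<and> (\<forall>j\<in>{..J}. [x = u j] (mod Q j))"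
        apply (rule chinese_remainder_unique_nat)
        using Qs_prop Qs_coprime unfolding Q_def
        by (auto simp: prime_gt_0_nat)
      then obtain x where x: "x < (\<Prod>j\<in>{..J}. Q j)" "\<forall>j\<in>{..J}. [x = u j] (mod Q j)" by blast
      show "\<exists>i<(\<Prod>j\<in>{..J}. Q j). \<forall>k<n. fn n (p k + int i) = l"
      proof (rule exI[of _ x], rule conjI[OF x(1)], intro allI impI)
        fix k assume kn: "k < n"
        have Qpos: "\<And>j. Q j > 0" using Qs_prop unfolding Q_def by (metis prime_gt_0_nat)
        have xmod: "int x mod int (Q j) = int (u j)" if "j \<le> J" for j
        proof -
          have "x mod Q j = u j mod Q j" using x(2) that by (auto simp: cong_def)
          moreover have "u j < Q j"
          proof (cases "j < J")
            case True then show ?thesis using R[of j] by (simp add: u_def)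
          next
            case False
            then have jJ: "j = J" using that by simp
            have "(int d - p 0) mod int (Q J) < int (Q J)" using Qpos[of J] by simp
            then show ?thesis using jJ False Qpos[of J] unfolding u_def by (simp add: nat_less_iff)
          qed
          ultimately show ?thesis by (metis mod_less of_nat_mod)
        qed
        have pk: "\<bar>p k - p 0\<bar> \<le> int d"
          using diam kn by (cases "k = 0") (auto simp: abs_minus_commute)
        have inJ: "(p k + int x) mod int (Q J) \<le> int (2*J)"
        proof -
          have "(p k + int x) mod int (Q J) = (p k + int x mod int (Q J)) mod int (Q J)"
            by (simp add: mod_add_right_eq)
          also have "int x mod int (Q J) = (int d - p 0) mod int (Q J)"
            using xmod[of J] Qpos[of J] by (simp add: u_def)
          also have "(p k + (int d - p 0) mod int (Q J)) mod int (Q J) = (p k - p 0 + int d) mod int (Q J)"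
            by (simp add: mod_add_right_eq algebra_simps)
          also have "\<dots> = p k - p 0 + int d"
            using pk QJ dJ by (intro mod_pos_pos_trivial) auto
          finally show ?thesis using pk dJ by simp
        qed
        have notin: "\<not> (p k + int x) mod int (Q j) \<le> int (2*j)" if "j < J" for j
        proof
          assume a: "(p k + int x) mod int (Q j) \<le> int (2*j)"
          define s where "s = nat ((p k + int x) mod int (Q j))"
          have s0: "int s = (p k + int x) mod int (Q j)" using Qpos[of j] unfolding s_def by simp
          have "s \<le> 2*j" using a s0 by linarith
          have "(int s - p k) mod int (Q j) = int x mod int (Q j)"
            unfolding s0 by (simp add: mod_diff_left_eq)
          also have "\<dots> = int (R j)" using xmod[of j] that by (simp add: u_def)
          finally have "R j = nat ((int s - p k) mod int (Q j))" by simp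
          with R[OF that] kn \<open>s \<le> 2*j\<close> show False by blast
        qed
        have "(LEAST j. (p k + int x) mod int (Qs n j) \<le> int (2*j)) = J"
          apply (rule Least_equality)
          using inJ notin unfolding Q_def by (auto simp: not_le[symmetric])
        then show "fn n (p k + int x) = l" unfolding fn_def J_def by simp
      qed
    qed
  qed
qed

end
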